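(* Let $f:\Gamma_+\to\mathbb{R}$ be a smooth function which is homogeneous of degree one and monotone increasing. Then $f\in\mathcal{C}_n$ if and only if $f$ is concave and the function $f_{-1}(x_1,\dots,x_n)=\big(f(x_1^{-1},\dots,x_n^{-1})\big)^{-1}$ is concave on $\Gamma_+$.
   Context: $\Gamma_+=\{x\in\mathbb{R}^n: x_i>0\ \forall i\}$. $\mathcal{C}_n$ is the class of functions $f:\Gamma_+\to\mathbb{R}$ which are $C^\infty$, homogeneous of degree one ($f(cx)=cf(x)$ for $c>0$), strictly monotone increasing ($\partial f/\partial x_i>0$ for each $i$), concave, and inverse-concave, meaning $f^*(x_1,\dots,x_n)=-f(x_1^{-1},\dots,x_n^{-1})$ is concave on $\Gamma_+$. *)

theory Defs
  imports "HOL-Analysis.Analysis"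
begin

definition Gamma_plus :: "(real ^ 'n) set" where
  "Gamma_plus = {x. \<forall>i. x $ i > 0}"

fun higher_differentiable_on ::
  "'a::real_normed_vector set \<Rightarrow> ('a \<Rightarrow> 'b::real_normed_vector) \<Rightarrow> nat \<Rightarrow> bool" where
  "higher_differentiable_on S f 0 = continuous_on S f"
| "higher_differentiable_on S f (Suc n) =
     (f differentiable_on S \<and>
      (\<forall>v. higher_differentiable_on S (\<lambda>x. frechet_derivative f (at x) v) n))"

definition smooth_on ::
  "'a::real_normed_vector set \<Rightarrow> ('a \<Rightarrow> 'b::real_normed_vector) \<Rightarrow> bool" where
  "smooth_on S f = (\<forall>k. higher_differentiable_on S f k)"

definition homogeneous1 :: "(real ^ 'n \<Rightarrow> real) \<Rightarrow> bool" where
  "homogeneous1 f = (\<forall>x \<in> Gamma_plus. \<forall>c > 0. f (c *\<^sub>R x) = c * f x)"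

definition strictly_monotone :: "(real ^ 'n \<Rightarrow> real) \<Rightarrow> bool" where
  "strictly_monotone f =
     (\<forall>x \<in> Gamma_plus. \<forall>i. frechet_derivative f (at x) (axis i 1) > 0)"

definition inv_coords :: "real ^ 'n \<Rightarrow> real ^ 'n" where
  "inv_coords x = (\<chi> i. inverse (x $ i))"

definition fstar :: "(real ^ 'n \<Rightarrow> real) \<Rightarrow> real ^ 'n \<Rightarrow> real" where
  "fstar f x = - f (inv_coords x)"

definition fminus1 :: "(real ^ 'n \<Rightarrow> real) \<Rightarrow> real ^ 'n \<Rightarrow> real" where
  "fminus1 f x = inverse (f (inv_coords x))"

definition class_C :: "(real ^ 'n \<Rightarrow> real) set" where
  "class_C = {f. smooth_on Gamma_plus f \<and> homogeneous1 f \<and> strictly_monotone f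
                 \<and> concave_on Gamma_plus f \<and> concave_on Gamma_plus (fstar f)}"

end

theory Submission
  imports Defs
begin

lemma comb_pos:
  fixes a b u v :: real
  assumes "a > 0" "b > 0" "u \<ge> 0" "v \<ge> 0" "u + v = 1"
  shows "u * a + v * b > 0"
proof (cases "u = 0")
  case True
  then show ?thesis using assms by simp
next
  case False
  then have "u * a > 0" using assms by simp
  moreover have "v * b \<ge> 0" using assms by simp
  ultimately show ?thesis by linarith
qed

lemma open_Gamma_plus: "open (Gamma_plus :: (real^'n) set)"
proof -
  have eq: "(Gamma_plus :: (real^'n) set) = (\<Inter>i\<in>UNIV. {x. x$i > 0})"
    by (auto simp: Gamma_plus_def)
  have "open (\<Inter>i\<in>UNIV. {x::real^'n. x$i > 0})"
    by (intro open_INT) (simp_all add: open_halfspace_component_gt_cart)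
  then show ?thesis by (simp only: eq)
qed

lemma convex_Gamma_plus: "convex (Gamma_plus :: (real^'n) set)"
  unfolding convex_def Gamma_plus_def
proof (intro allI impI ballI, clarsimp)
  fix x y :: "real^'n" and u v :: real and i
  assume "\<forall>i. 0 < x $ i" "\<forall>i. 0 < y $ i" "0 \<le> u" "0 \<le> v" "u + v = 1"
  then have "x$i > 0" "y$i > 0" by auto
  then show "0 < u * x $ i + v * y $ i"
    using comb_pos[of "x$i" "y$i" u v] \<open>0 \<le> u\<close> \<open>0 \<le> v\<close> \<open>u + v = 1\<close> by blast
qed

lemma f_pos:
  fixes f :: "real ^ 'n \<Rightarrow> real"
  assumes sm: "smooth_on Gamma_plus f" and hom: "homogeneous1 f"
    and mon: "strictly_monotone f" and x: "x \<in> Gamma_plus"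
  shows "f x > 0"
proof -
  have "higher_differentiable_on Gamma_plus f (Suc 0)" using sm smooth_on_def by blast
  then have "f differentiable_on Gamma_plus" by simp
  then have "f differentiable at x"
    using x open_Gamma_plus differentiable_on_eq_differentiable_at by blast
  define D where "D = frechet_derivative f (at x)"
  have fd: "(f has_derivative D) (at x)" using \<open>f differentiable at x\<close> frechet_derivative_works D_def by blast
  have lin: "linear D" using fd has_derivative_linear by blast
  have "D x = D (\<Sum>i\<in>UNIV. (x$i) *\<^sub>R axis i 1)"
    using basis_expansion[of x] by (simp add: scalar_mult_eq_scaleR)
  also have "\<dots> = (\<Sum>i\<in>UNIV. (x$i) * D (axis i 1))"
    using lin by (simp add: linear_sum linear_cmul)
  also have "\<dots> > 0"
    using x mon by (intro sum_pos) (auto simp: Gamma_plus_def strictly_monotone_def D_def)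
  finally have Dx: "D x > 0" .
  have p: "((\<lambda>c::real. c *\<^sub>R x) has_derivative (\<lambda>h. h *\<^sub>R x)) (at 1)"
    by (auto intro!: derivative_eq_intros)
  have "((f \<circ> (\<lambda>c::real. c *\<^sub>R x)) has_derivative (D \<circ> (\<lambda>h. h *\<^sub>R x))) (at 1)"
    using diff_chain_at[OF p] fd by simp
  then have c1: "((\<lambda>c::real. c * f x) has_derivative (D \<circ> (\<lambda>h. h *\<^sub>R x))) (at 1)"
    by (rule has_derivative_transform_within_open[where s="{0<..}"])
       (use hom x in \<open>auto simp: homogeneous1_def\<close>)
  have c2: "((\<lambda>c::real. c * f x) has_derivative (\<lambda>h. h * f x)) (at 1)"
    by (auto intro!: derivative_eq_intros)
  have "(D \<circ> (\<lambda>h. h *\<^sub>R x)) = (\<lambda>h. h * f x)" using has_derivative_unique[OF c1 c2] .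
  then have "(D \<circ> (\<lambda>h. h *\<^sub>R x)) 1 = (\<lambda>h. h * f x) 1" by (simp only:)
  then have "D x = f x" by simp
  with Dx show ?thesis by simp
qed

lemma abstract_equiv:
  fixes g :: "real ^ 'n \<Rightarrow> real"
  assumes pos: "\<And>y. y \<in> Gamma_plus \<Longrightarrow> g y > 0"
    and hom: "\<And>y c. y \<in> Gamma_plus \<Longrightarrow> c > 0 \<Longrightarrow> g (c *\<^sub>R y) = g y / c"
  shows "convex_on Gamma_plus g \<longleftrightarrow> concave_on Gamma_plus (\<lambda>y. inverse (g y))"
proof
  assume cv: "convex_on Gamma_plus g"
  show "concave_on Gamma_plus (\<lambda>y. inverse (g y))"
    unfolding concave_on_iff
  proof (intro conjI convex_Gamma_plus ballI allI impI)
    fix x y :: "real^'n" and u v :: real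
    assume x: "x \<in> Gamma_plus" and y: "y \<in> Gamma_plus" and u: "0 \<le> u" and v: "0 \<le> v" and uv: "u + v = 1"
    define a where "a = inverse (g x)"
    define b where "b = inverse (g y)"
    have a: "a > 0" and b: "b > 0" using pos x y by (auto simp: a_def b_def)
    define s where "s = u * a + v * b"
    have s: "s > 0" unfolding s_def using a b u v uv by (rule comb_pos)
    have xs: "(1/a) *\<^sub>R x \<in> Gamma_plus" and ys: "(1/b) *\<^sub>R y \<in> Gamma_plus"
      using x y a b by (auto simp: Gamma_plus_def)
    have gx: "g ((1/a) *\<^sub>R x) = 1" using hom[OF x, of "1/a"] a pos[OF x] by (simp add: a_def)
    have gy: "g ((1/b) *\<^sub>R y) = 1" using hom[OF y, of "1/b"] b pos[OF y] by (simp add: b_def)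
    define z where "z = (u * a / s) *\<^sub>R ((1/a) *\<^sub>R x) + (v * b / s) *\<^sub>R ((1/b) *\<^sub>R y)"
    have w: "u * a / s + v * b / s = 1" using s by (simp add: s_def add_divide_distrib[symmetric])
    have c1: "u * a / s \<ge> 0" "v * b / s \<ge> 0" using a b s u v by auto
    have cvd: "\<forall>x\<in>Gamma_plus. \<forall>y\<in>Gamma_plus. \<forall>u\<ge>0. \<forall>v\<ge>0. u + v = 1 \<longrightarrow> g (u *\<^sub>R x + v *\<^sub>R y) \<le> u * g x + v * g y"
      using cv unfolding convex_on_def by blast
    have "g z \<le> (u * a / s) * g ((1/a) *\<^sub>R x) + (v * b / s) * g ((1/b) *\<^sub>R y)"
      unfolding z_def by (rule cvd[rule_format, OF xs ys c1 w])
    then have gz: "g z \<le> 1" using gx gy w by simp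
    have zG: "z \<in> Gamma_plus"
      unfolding z_def by (rule convexD[OF convex_Gamma_plus xs ys c1 w])
    have "u *\<^sub>R x + v *\<^sub>R y = s *\<^sub>R z"
      using a b s by (simp add: z_def scaleR_add_right)
    then have "g (u *\<^sub>R x + v *\<^sub>R y) = g z / s" using hom[OF zG s] by simp
    also have "\<dots> \<le> 1 / s" using gz s by (simp add: divide_right_mono)
    finally have "g (u *\<^sub>R x + v *\<^sub>R y) \<le> 1 / s" .
    moreover have "g (u *\<^sub>R x + v *\<^sub>R y) > 0"
      by (rule pos[OF convexD[OF convex_Gamma_plus x y u v uv]])
    ultimately have "s \<le> inverse (g (u *\<^sub>R x + v *\<^sub>R y))" using s
      by (simp add: field_simps)
    then show "u * inverse (g x) + v * inverse (g y) \<le> inverse (g (u *\<^sub>R x + v *\<^sub>R y))"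
      by (simp add: s_def a_def b_def)
  qed
next
  assume cc: "concave_on Gamma_plus (\<lambda>y. inverse (g y))"
  show "convex_on Gamma_plus g"
    unfolding convex_on_def
  proof (intro conjI convex_Gamma_plus ballI allI impI)
    fix x y :: "real^'n" and u v :: real
    assume x: "x \<in> Gamma_plus" and y: "y \<in> Gamma_plus" and u: "0 \<le> u" and v: "0 \<le> v" and uv: "u + v = 1"
    define a where "a = inverse (g x)"
    define b where "b = inverse (g y)"
    have a: "a > 0" and b: "b > 0" using pos x y by (auto simp: a_def b_def)
    define s where "s = u * a + v * b"
    have s: "s > 0" unfolding s_def using a b u v uv by (rule comb_pos)
    have "s \<le> inverse (g (u *\<^sub>R x + v *\<^sub>R y))"
      using conjunct2[OF cc[unfolded concave_on_iff], rule_format, OF x y u v uv] unfolding s_def a_def b_def .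
    moreover have gp: "g (u *\<^sub>R x + v *\<^sub>R y) > 0"
      by (rule pos[OF convexD[OF convex_Gamma_plus x y u v uv]])
    ultimately have "g (u *\<^sub>R x + v *\<^sub>R y) \<le> 1 / s" using s
      by (simp add: field_simps)
    also have "1 / s \<le> u * (1/a) + v * (1/b)"
    proof -
      have ci: "convex_on {0<..} (\<lambda>t::real. 1 / t)"
        by (rule convex_on_inverse[unfolded inverse_eq_divide]) auto
      have "1 / (u *\<^sub>R a + v *\<^sub>R b) \<le> u * (1 / a) + v * (1 / b)"
        by (rule conjunct2[OF ci[unfolded convex_on_def], rule_format, OF _ _ u v uv]) (use a b in auto)
      then have "1 / (u * a + v * b) \<le> u * (1 / a) + v * (1 / b)" by simp
      then show ?thesis unfolding s_def .
    qed
    also have "\<dots> = u * g x + v * g y" by (simp add: a_def b_def divide_inverse)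
    finally show "g (u *\<^sub>R x + v *\<^sub>R y) \<le> u * g x + v * g y" .
  qed
qed

theorem corollary2p4:
  fixes f :: "real ^ 'n \<Rightarrow> real"
  assumes "smooth_on Gamma_plus f"
    and "homogeneous1 f"
    and "strictly_monotone f"
  shows "f \<in> class_C \<longleftrightarrow>
           (concave_on Gamma_plus f \<and> concave_on Gamma_plus (fminus1 f))"
proof -
  define g where "g y = f (inv_coords y)" for y
  have ic: "inv_coords y \<in> Gamma_plus" if "y \<in> Gamma_plus" for y :: "real^'n"
    using that by (simp add: Gamma_plus_def inv_coords_def)
  have pos: "g y > 0" if "y \<in> Gamma_plus" for y
    unfolding g_def using f_pos[OF assms ic[OF that]] .
  have hom: "g (c *\<^sub>R y) = g y / c" if "y \<in> Gamma_plus" "c > 0" for y c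
  proof -
    have "inv_coords (c *\<^sub>R y) = inverse c *\<^sub>R inv_coords y"
      by (simp add: inv_coords_def vec_eq_iff)
    then show ?thesis using assms(2) ic[OF that(1)] that(2)
      by (simp add: g_def homogeneous1_def divide_inverse mult.commute)
  qed
  have e1: "concave_on Gamma_plus (fstar f) \<longleftrightarrow> convex_on Gamma_plus g"
    by (simp add: convex_on_iff_concave fstar_def[abs_def] g_def[abs_def])
  have e2: "fminus1 f = (\<lambda>y. inverse (g y))"
    by (rule ext) (simp add: fminus1_def g_def)
  show ?thesis using abstract_equiv[OF pos hom] e1 e2 assms
    by (simp add: class_C_def)
qed

end
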